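(* Let $(Y,\rho)$ be an infinite compact metric space, let $f:\{0,1\}^{\mathbb{N}}\to Y$ be a continuous surjection, let $\mathcal{D}_f=\{f^{-1}(y):y\in Y\}$ and $h:Y\to\mathcal{D}_f$, $h(y)=f^{-1}(y)$. Suppose $G:\{0,1\}^{\mathbb{N}}\to\{0,1\}^{\mathbb{N}}$ is a continuous onto map which is chaotic and satisfies $G(D)\in\mathcal{D}_f$ for every $D\in\mathcal{D}_f$, and let $H:\mathcal{D}_f\to\mathcal{D}_f$, $H(D)=G(D)$. Then $h$ is a homeomorphism onto $(\mathcal{D}_f,\tau(\mathcal{D}_f))$ and $F=h^{-1}\circ H\circ h:Y\to Y$ is a continuous onto map that is chaotic on $Y$.
   Context: $\{0,1\}^{\mathbb{N}}$ carries the product topology of the discrete topology on $\{0,1\}$, metrized by $d(\psi,\varphi)=\sum_{i\ge1}|\psi(i)-\varphi(i)|/2^i$. The decomposition topology on $\mathcal{D}_f$ is $\{\mathcal{U}\subset\mathcal{D}_f:\bigcup\mathcal{U}\text{ open}\}$. A map $g$ on a metric space $(Z,d)$ is chaotic (Devaney) if it is onto, topologically transitive (for nonempty open $U,V$ there is $n>0$ with $g^n(U)\cap V\neq\emptyset$), has a dense set of periodic points, and is sensitive to initial conditions (there is $\eta>0$ such that for every $x$ and neighbourhood $N$ of $x$ there are $y\in N$, $n\ge0$ with $d(g^n(x),g^n(y))>\eta$). *)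

theory Defs
  imports "HOL-Analysis.Analysis"
begin

text \<open>Cantor space {0,1}^N, coordinates i = 1,2,... encoded as nat => bool with
  index i-1; the metric is sum_i |psi(i)-phi(i)| / 2^i.\<close>
definition cantor_dist :: "(nat \<Rightarrow> bool) \<Rightarrow> (nat \<Rightarrow> bool) \<Rightarrow> real" where
  "cantor_dist \<psi> \<phi> = (\<Sum>i. (if \<psi> i = \<phi> i then 0 else 1) / 2 ^ (Suc i))"

definition cantor_top :: "(nat \<Rightarrow> bool) topology" where
  "cantor_top = Metric_space.mtopology UNIV cantor_dist"

definition chaotic :: "'a set \<Rightarrow> ('a \<Rightarrow> 'a \<Rightarrow> real) \<Rightarrow> ('a \<Rightarrow> 'a) \<Rightarrow> bool" where
  "chaotic M d g \<longleftrightarrow>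
     g ` M = M \<and>
     (\<forall>U V. openin (Metric_space.mtopology M d) U \<and> openin (Metric_space.mtopology M d) V
            \<and> U \<noteq> {} \<and> V \<noteq> {} \<longrightarrow> (\<exists>n>0. (g ^^ n) ` U \<inter> V \<noteq> {})) \<and>
     (Metric_space.mtopology M d) closure_of {x \<in> M. \<exists>n>0. (g ^^ n) x = x} = M \<and>
     (\<exists>\<eta>>0. \<forall>x\<in>M. \<forall>N. openin (Metric_space.mtopology M d) N \<and> x \<in> N \<longrightarrow>
            (\<exists>y\<in>N. \<exists>n. d ((g ^^ n) x) ((g ^^ n) y) > \<eta>))"

definition decomp_topology :: "'a topology \<Rightarrow> 'a set set \<Rightarrow> 'a set topology" where
  "decomp_topology X P = topology (\<lambda>\<U>. \<U> \<subseteq> P \<and> openin X (\<Union>\<U>))"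

end

theory Submission
  imports Defs
begin


definition cterm :: "(nat \<Rightarrow> bool) \<Rightarrow> (nat \<Rightarrow> bool) \<Rightarrow> nat \<Rightarrow> real" where
  "cterm \<psi> \<phi> i = (if \<psi> i = \<phi> i then 0 else 1) / 2 ^ (Suc i)"

lemma cd_def': "cantor_dist \<psi> \<phi> = suminf (cterm \<psi> \<phi>)"
  by (simp only: cantor_dist_def cterm_def[abs_def])

lemma cterm_bounds: "0 \<le> cterm \<psi> \<phi> i" "cterm \<psi> \<phi> i \<le> (1/2)^Suc i"
  by (auto simp: cterm_def power_one_over)

lemma geo_summable: "summable (\<lambda>i. (1/2::real)^Suc i)"
  using summable_geometric[of "1/2::real"] summable_mult[of _ "1/2"] by simp

lemma geo_suminf: "(\<Sum>i. (1/2::real)^Suc i) = 1"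
proof -
  have "(\<Sum>i. (1/2::real)^Suc i) = (\<Sum>i. 1/2 * (1/2::real)^i)" by simp
  also have "\<dots> = 1/2 * (\<Sum>i. (1/2::real)^i)"
    by (rule suminf_mult) (use summable_geometric[of "1/2::real"] in simp)
  also have "\<dots> = 1" using suminf_geometric[of "1/2::real"] by simp
  finally show ?thesis .
qed

lemma cterm_summable: "summable (cterm \<psi> \<phi>)"
  by (rule summable_comparison_test[OF _ geo_summable]) (use cterm_bounds in auto)

lemma cd_ge: "\<psi> i \<noteq> \<phi> i \<Longrightarrow> 1 / 2 ^ Suc i \<le> cantor_dist \<psi> \<phi>"
proof -
  assume a: "\<psi> i \<noteq> \<phi> i"
  have "sum (cterm \<psi> \<phi>) {i} \<le> suminf (cterm \<psi> \<phi>)"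
    by (rule sum_le_suminf[OF cterm_summable]) (auto simp: cterm_bounds)
  then show ?thesis using a by (simp add: cd_def' cterm_def)
qed

lemma cd_nonneg: "0 \<le> cantor_dist \<psi> \<phi>"
  unfolding cd_def' by (rule suminf_nonneg[OF cterm_summable]) (simp add: cterm_bounds)

lemma cd_le: assumes "\<forall>i<n. \<psi> i = \<phi> i" shows "cantor_dist \<psi> \<phi> \<le> 1 / 2 ^ n"
proof -
  have "cantor_dist \<psi> \<phi> = (\<Sum>i. cterm \<psi> \<phi> (i + n)) + (\<Sum>i<n. cterm \<psi> \<phi> i)"
    unfolding cd_def' by (rule suminf_split_initial_segment[OF cterm_summable])
  also have "(\<Sum>i<n. cterm \<psi> \<phi> i) = 0" using assms by (simp add: cterm_def)
  also have "(\<Sum>i. cterm \<psi> \<phi> (i + n)) \<le> (\<Sum>i. 1/2^n * (1/2::real)^Suc i)"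
  proof (rule suminf_le)
    show "summable (\<lambda>i. cterm \<psi> \<phi> (i + n))"
      using cterm_summable summable_iff_shift by blast
    show "summable (\<lambda>i. 1/2^n * (1/2::real)^Suc i)"
      by (rule summable_mult[OF geo_summable])
    fix i
    have "cterm \<psi> \<phi> (i + n) \<le> (1/2)^Suc (i+n)" by (rule cterm_bounds)
    also have "\<dots> = 1/2^n * (1/2::real)^Suc i" by (simp add: power_add power_one_over)
    finally show "cterm \<psi> \<phi> (i + n) \<le> 1/2^n * (1/2::real)^Suc i" .
  qed
  also have "(\<Sum>i. 1/2^n * (1/2::real)^Suc i) = 1/2^n"
    using suminf_mult[OF geo_summable, of "1/2^n"] geo_suminf by simp
  finally show ?thesis by simp
qed

lemma cd_commute: "cantor_dist \<psi> \<phi> = cantor_dist \<phi> \<psi>"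
proof -
  have "cterm \<psi> \<phi> = cterm \<phi> \<psi>" by (auto simp: cterm_def fun_eq_iff)
  then show ?thesis by (simp add: cd_def')
qed

lemma cd_zero: "cantor_dist \<psi> \<phi> = 0 \<longleftrightarrow> \<psi> = \<phi>"
proof
  assume "cantor_dist \<psi> \<phi> = 0"
  moreover have "\<psi> i \<noteq> \<phi> i \<Longrightarrow> False" for i
  proof -
    assume "\<psi> i \<noteq> \<phi> i"
    from cd_ge[of \<psi> i \<phi>, OF this] have "(1::real) / 2 ^ Suc i \<le> cantor_dist \<psi> \<phi>" .
    moreover have "(0::real) < 1 / 2 ^ Suc i" by simp
    ultimately show False using \<open>cantor_dist \<psi> \<phi> = 0\<close> by linarith
  qed
  ultimately show "\<psi> = \<phi>" by blast
qed (simp add: cantor_dist_def)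

lemma cd_triangle: "cantor_dist x z \<le> cantor_dist x y + cantor_dist y z"
proof -
  have "suminf (cterm x z) \<le> suminf (\<lambda>i. cterm x y i + cterm y z i)"
  proof (rule suminf_le)
    fix i show "cterm x z i \<le> cterm x y i + cterm y z i" by (auto simp: cterm_def)
  qed (auto intro: summable_add cterm_summable)
  also have "\<dots> = suminf (cterm x y) + suminf (cterm y z)"
    by (rule suminf_add[OF cterm_summable cterm_summable, symmetric])
  finally show ?thesis by (simp add: cd_def')
qed

lemma cantor_metric: "Metric_space UNIV cantor_dist"
  by unfold_locales (auto simp: cd_nonneg cd_commute cd_zero cd_triangle)


interpretation CM: Metric_space UNIV cantor_dist by (rule cantor_metric)

lemma cyl_small: "\<forall>i<Suc n. y i = x i \<Longrightarrow> cantor_dist x y < 1/2^n"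
proof -
  assume "\<forall>i<Suc n. y i = x i"
  then have "cantor_dist x y \<le> 1/2^Suc n" by (intro cd_le) auto
  also have "(1::real)/2^Suc n < 1/2^n" by (simp add: field_simps)
  finally show ?thesis .
qed

lemma small_cyl: "cantor_dist x y < 1/2^n \<Longrightarrow> \<forall>i<n. y i = x i"
proof (intro allI impI, rule ccontr)
  fix i assume a: "cantor_dist x y < 1/2^n" "i < n" "y i \<noteq> x i"
  then have "(1::real)/2^Suc i \<le> cantor_dist x y" using cd_ge[of x i y] by auto
  moreover have "(1::real)/2^n \<le> 1/2^Suc i"
    using a(2) by (intro divide_left_mono power_increasing) auto
  ultimately show False using a(1) by linarith
qed

lemma openin_cantor_top: "openin cantor_top U \<longleftrightarrow> (\<forall>x\<in>U. \<exists>n. \<forall>y. (\<forall>i<n. y i = x i) \<longrightarrow> y \<in> U)"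
proof -
  have e: "openin cantor_top U \<longleftrightarrow> (\<forall>x\<in>U. \<exists>r>0. CM.mball x r \<subseteq> U)"
    unfolding cantor_top_def CM.openin_mtopology by blast
  show ?thesis
  proof
    assume "openin cantor_top U"
    then have h: "\<forall>x\<in>U. \<exists>r>0. CM.mball x r \<subseteq> U" using e by blast
    show "\<forall>x\<in>U. \<exists>n. \<forall>y. (\<forall>i<n. y i = x i) \<longrightarrow> y \<in> U"
    proof
      fix x assume "x \<in> U"
      then obtain r where r: "r > 0" "CM.mball x r \<subseteq> U" using h by blast
      obtain n where n: "(1/2::real)^n < r" using real_arch_pow_inv[OF r(1), of "1/2"] by auto
      show "\<exists>n. \<forall>y. (\<forall>i<n. y i = x i) \<longrightarrow> y \<in> U"
      proof (intro exI allI impI)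
        fix y assume "\<forall>i<Suc n. y i = x i"
        then have "cantor_dist x y < 1/2^n" by (rule cyl_small)
        then have "cantor_dist x y < r" using n by (simp add: power_one_over)
        then have "y \<in> CM.mball x r" by simp
        then show "y \<in> U" using r(2) by blast
      qed
    qed
  next
    assume h: "\<forall>x\<in>U. \<exists>n. \<forall>y. (\<forall>i<n. y i = x i) \<longrightarrow> y \<in> U"
    have "\<forall>x\<in>U. \<exists>r>0. CM.mball x r \<subseteq> U"
    proof
      fix x assume "x \<in> U"
      then obtain n where n: "\<forall>y. (\<forall>i<n. y i = x i) \<longrightarrow> y \<in> U" using h by blast
      have "CM.mball x (1/2^n) \<subseteq> U"
      proof
        fix y assume "y \<in> CM.mball x (1/2^n)"
        then have "cantor_dist x y < 1/2^n" by simp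
        then have "\<forall>i<n. y i = x i" by (rule small_cyl)
        then show "y \<in> U" using n by blast
      qed
      then show "\<exists>r>0. CM.mball x r \<subseteq> U" by (intro exI[of _ "1/2^n"]) simp
    qed
    then show "openin cantor_top U" using e by blast
  qed
qed

definition ptop :: "(nat \<Rightarrow> bool) topology" where
  "ptop = product_topology (\<lambda>_. discrete_topology UNIV) UNIV"

lemma e: "openin ptop U \<longleftrightarrow> (\<forall>x\<in>U. \<exists>V. finite {i. V i \<noteq> UNIV} \<and> x \<in> Pi\<^sub>E UNIV V \<and> Pi\<^sub>E UNIV V \<subseteq> U)"
  unfolding ptop_def openin_product_topology_alt by simp

lemma openin_ptop: "openin ptop U \<longleftrightarrow> (\<forall>x\<in>U. \<exists>n. \<forall>y. (\<forall>i<n. y i = x i) \<longrightarrow> y \<in> U)"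
proof -
  have "(\<exists>V. finite {i. V i \<noteq> UNIV} \<and> x \<in> Pi\<^sub>E UNIV V \<and> Pi\<^sub>E UNIV V \<subseteq> U) \<longleftrightarrow>
        (\<exists>n. \<forall>y. (\<forall>i<n. y i = x i) \<longrightarrow> y \<in> U)" for x
  proof
    assume "\<exists>V. finite {i. V i \<noteq> UNIV} \<and> x \<in> Pi\<^sub>E UNIV V \<and> Pi\<^sub>E UNIV V \<subseteq> U"
    then obtain V where V: "finite {i. V i \<noteq> UNIV}" "x \<in> Pi\<^sub>E UNIV V" "Pi\<^sub>E UNIV V \<subseteq> U" by blast
    obtain n where n0: "{i. V i \<noteq> UNIV} \<subseteq> {..<n}" using finite_nat_bounded[OF V(1)] by (elim exE)
    have n: "\<And>i. V i \<noteq> UNIV \<Longrightarrow> i < n" using n0 by auto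
    show "\<exists>n. \<forall>y. (\<forall>i<n. y i = x i) \<longrightarrow> y \<in> U"
    proof (intro exI allI impI)
      fix y assume y: "\<forall>i<n. y i = x i"
      have "y i \<in> V i" for i
      proof (cases "i < n")
        case True then have "y i = x i" using y by blast
        moreover have "x i \<in> V i" using V(2) by (simp add: PiE_iff)
        ultimately show ?thesis by simp
      next
        case False then have "V i = UNIV" using n by blast
        then show ?thesis by simp
      qed
      then have "y \<in> Pi\<^sub>E UNIV V" by (simp add: PiE_iff)
      then show "y \<in> U" using V(3) by blast
    qed
  next
    assume "\<exists>n. \<forall>y. (\<forall>i<n. y i = x i) \<longrightarrow> y \<in> U"
    then obtain n where n: "\<forall>y. (\<forall>i<n. y i = x i) \<longrightarrow> y \<in> U" by blast
    define V where "V i = (if i < n then {x i} else UNIV)" for i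
    have "{i. V i \<noteq> UNIV} \<subseteq> {..<n}" by (auto simp: V_def)
    then have "finite {i. V i \<noteq> UNIV}" by (rule finite_subset) simp
    moreover have "x \<in> Pi\<^sub>E UNIV V" by (simp add: V_def PiE_iff)
    moreover have "Pi\<^sub>E UNIV V \<subseteq> U"
    proof
      fix y assume "y \<in> Pi\<^sub>E UNIV V"
      then have yV: "y i \<in> V i" for i by (simp add: PiE_iff)
      have "\<forall>i<n. y i = x i"
      proof (intro allI impI)
        fix i assume "i < n"
        then have "V i = {x i}" by (simp add: V_def)
        then show "y i = x i" using yV[of i] by (metis singletonD)
      qed
      then show "y \<in> U" using n by blast
    qed
    ultimately show "\<exists>V. finite {i. V i \<noteq> UNIV} \<and> x \<in> Pi\<^sub>E UNIV V \<and> Pi\<^sub>E UNIV V \<subseteq> U" by blast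
  qed
  then show ?thesis by (simp add: e)
qed

lemma cantor_top_ptop: "cantor_top = ptop"
  unfolding topology_eq openin_cantor_top openin_ptop by (rule allI) (rule refl)

lemma compact_cantor: "compact_space cantor_top"
  unfolding cantor_top_ptop ptop_def
  by (simp add: compact_space_product_topology compact_space_discrete_topology)

lemma topspace_cantor [simp]: "topspace cantor_top = UNIV"
  unfolding cantor_top_def by simp




lemma funpow_mult_fix: "(g ^^ p) q = q \<Longrightarrow> (g ^^ (k * p)) q = q"
proof (induction k)
  case (Suc k)
  have "(g ^^ (Suc k * p)) q = (g ^^ p) ((g ^^ (k * p)) q)"
    by (simp add: funpow_add)
  then show ?case using Suc by simp
qed simp

lemma funpow_mod: assumes "(g ^^ p) q = q" shows "(g ^^ i) q = (g ^^ (i mod p)) q"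
proof -
  have "(g ^^ i) q = (g ^^ (i mod p + (i div p) * p)) q" by simp
  also have "\<dots> = (g ^^ (i mod p)) ((g ^^ ((i div p) * p)) q)" by (simp only: funpow_add o_apply)
  also have "\<dots> = (g ^^ (i mod p)) q" using funpow_mult_fix[OF assms] by simp
  finally show ?thesis .
qed

lemma finite_orbit: assumes "(g ^^ p) q = q" "p > 0" shows "finite (range (\<lambda>i. (g ^^ i) q))"
proof -
  have "range (\<lambda>i. (g ^^ i) q) \<subseteq> (\<lambda>i. (g ^^ i) q) ` {..<p}"
  proof
    fix z assume "z \<in> range (\<lambda>i. (g ^^ i) q)"
    then obtain i where "z = (g ^^ i) q" by blast
    then have "z = (g ^^ (i mod p)) q" using funpow_mod[OF assms(1)] by simp
    moreover have "i mod p \<in> {..<p}" using assms(2) by simp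
    ultimately show "z \<in> (\<lambda>i. (g ^^ i) q) ` {..<p}" by blast
  qed
  then show ?thesis by (rule finite_subset) simp
qed

lemma funpow_in: "g ` M \<subseteq> M \<Longrightarrow> x \<in> M \<Longrightarrow> (g ^^ n) x \<in> M"
  by (induction n) auto

lemma continuous_map_funpow: "continuous_map X X g \<Longrightarrow> continuous_map X X (g ^^ n)"
  by (induction n) (auto intro: continuous_map_compose)

context Metric_space
begin

lemma banks:
  assumes inf: "infinite M"
    and cont: "continuous_map mtopology mtopology g"
    and trans: "\<forall>U V. openin mtopology U \<and> openin mtopology V
            \<and> U \<noteq> {} \<and> V \<noteq> {} \<longrightarrow> (\<exists>n>0. (g ^^ n) ` U \<inter> V \<noteq> {})"
    and dense: "mtopology closure_of {x \<in> M. \<exists>n>0. (g ^^ n) x = x} = M"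
  shows "\<exists>\<eta>>0. \<forall>x\<in>M. \<forall>N. openin mtopology N \<and> x \<in> N \<longrightarrow>
            (\<exists>y\<in>N. \<exists>n. d ((g ^^ n) x) ((g ^^ n) y) > \<eta>)"
proof -
  define Per where "Per = {x \<in> M. \<exists>n>0. (g ^^ n) x = x}"
  define orb where "orb q = range (\<lambda>i. (g ^^ i) q)" for q
  have gM: "g ` M \<subseteq> M" using cont continuous_map_image_subset_topspace by fastforce
  have orbM: "orb q \<subseteq> M" if "q \<in> M" for q using funpow_in[OF gM that] by (auto simp: orb_def)
  have orbfin: "finite (orb q)" if "q \<in> Per" for q
    using that finite_orbit by (auto simp: Per_def orb_def)
  have Per_ne: "Per \<noteq> {}"
  proof
    assume "Per = {}"
    moreover have "mtopology closure_of Per = M" using dense by (simp add: Per_def)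
    ultimately have "M = {}" by simp
    then show False using inf by simp
  qed
  then obtain q1 where q1: "q1 \<in> Per" by blast
  have "\<not> Per \<subseteq> orb q1"
  proof
    assume sub: "Per \<subseteq> orb q1"
    have t1: "t1_space mtopology" by (rule Hausdorff_imp_t1_space[OF Hausdorff_space_mtopology])
    have "closedin mtopology (orb q1)"
      using t1 orbfin[OF q1] orbM[of q1] q1 unfolding t1_space_closedin_finite by (auto simp: Per_def)
    then have "mtopology closure_of Per \<subseteq> orb q1"
      using sub by (meson closure_of_minimal)
    then have "M \<subseteq> orb q1" using dense by (simp add: Per_def)
    then show False using inf orbfin[OF q1] by (meson finite_subset)
  qed
  then obtain q2 where q2: "q2 \<in> Per" "q2 \<notin> orb q1" by blast
  have disj: "orb q1 \<inter> orb q2 = {}"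
  proof (rule ccontr)
    assume "orb q1 \<inter> orb q2 \<noteq> {}"
    then obtain z where z: "z \<in> orb q1" "z \<in> orb q2" by blast
    from z(2) obtain j where "z = (g ^^ j) q2" by (auto simp: orb_def)
    then have j: "(g ^^ j) q2 \<in> orb q1" using z(1) by simp
    obtain p2 where p2: "p2 > 0" "(g ^^ p2) q2 = q2" using q2(1) by (auto simp: Per_def)
    have "(g ^^ (j * p2)) q2 = q2" using funpow_mult_fix[OF p2(2)] .
    moreover have "j * p2 = (j * p2 - j) + j" using p2(1) by (simp add: le_add_diff_inverse2)
    ultimately have "(g ^^ (j * p2 - j)) ((g ^^ j) q2) = q2"
      by (metis funpow_add o_apply)
    moreover obtain i where "(g ^^ j) q2 = (g ^^ i) q1" using j by (auto simp: orb_def)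
    ultimately have "q2 = (g ^^ (j * p2 - j + i)) q1" by (simp add: funpow_add)
    then show False using q2(2) by (auto simp: orb_def)
  qed
  have q1M: "q1 \<in> M" and q2M: "q2 \<in> M" using q1 q2 by (auto simp: Per_def)
  define DS where "DS = (\<lambda>(a,b). d a b) ` (orb q1 \<times> orb q2)"
  have DSfin: "finite DS" using orbfin q1 q2 by (simp add: DS_def)
  have DSne: "DS \<noteq> {}" by (auto simp: DS_def orb_def)
  define \<delta> where "\<delta> = Min DS"
  have \<delta>pos: "\<delta> > 0"
  proof -
    have "\<forall>t\<in>DS. t > 0"
    proof
      fix t assume "t \<in> DS"
      then obtain a b where ab: "a \<in> orb q1" "b \<in> orb q2" "t = d a b" by (auto simp: DS_def)
      then have "a \<noteq> b" using disj by blast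
      moreover have "a \<in> M" "b \<in> M" using ab orbM q1M q2M by auto
      ultimately show "t > 0" using ab(3) by simp
    qed
    then show ?thesis using DSfin DSne by (simp add: \<delta>_def)
  qed
  have \<delta>le: "\<delta> \<le> d a b" if "a \<in> orb q1" "b \<in> orb q2" for a b
    unfolding \<delta>_def using DSfin that by (intro Min_le) (auto simp: DS_def)
  have far: "\<exists>q\<in>Per. \<forall>i. \<delta>/2 \<le> d x ((g ^^ i) q)" if "x \<in> M" for x
  proof (rule ccontr)
    assume "\<not> ?thesis"
    then obtain i1 i2 where "d x ((g ^^ i1) q1) < \<delta>/2" "d x ((g ^^ i2) q2) < \<delta>/2"
      using q1 q2 by (meson not_le)
    moreover have "d ((g ^^ i1) q1) ((g ^^ i2) q2) \<le> d ((g ^^ i1) q1) x + d x ((g ^^ i2) q2)"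
      using triangle[of "(g ^^ i1) q1" x "(g ^^ i2) q2"] funpow_in[OF gM q1M, of i1] funpow_in[OF gM q2M, of i2] that by simp
    moreover have "\<delta> \<le> d ((g ^^ i1) q1) ((g ^^ i2) q2)" by (rule \<delta>le) (auto simp: orb_def)
    ultimately show False by (simp add: commute)
  qed
  define \<eta> where "\<eta> = \<delta>/8"
  have \<eta>pos: "\<eta> > 0" using \<delta>pos by (simp add: \<eta>_def)
  show ?thesis
  proof (intro exI[of _ \<eta>] conjI \<eta>pos ballI allI impI)
    fix x N assume xM: "x \<in> M" and N: "openin mtopology N \<and> x \<in> N"
    define B where "B = N \<inter> mball x \<eta>"
    have Bopen: "openin mtopology B" using N by (auto simp: B_def)
    have xB: "x \<in> B" using N xM \<eta>pos by (simp add: B_def)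
    have "x \<in> mtopology closure_of Per" using dense xM by (simp add: Per_def)
    then obtain pp where pp: "pp \<in> Per" "pp \<in> B" using Bopen xB by (auto simp: in_closure_of)
    obtain n where n: "n > 0" "(g ^^ n) pp = pp" using pp(1) by (auto simp: Per_def)
    obtain q where q: "q \<in> Per" "\<forall>i. \<delta>/2 \<le> d x ((g ^^ i) q)" using far[OF xM] by blast
    have qM: "q \<in> M" using q(1) by (simp add: Per_def)
    define W where "W = (\<Inter>i\<in>{..n}. {z \<in> M. (g ^^ i) z \<in> mball ((g ^^ i) q) \<eta>})"
    have Wopen: "openin mtopology W"
      unfolding W_def
    proof (rule openin_INT2)
      fix i
      have "openin mtopology {z \<in> topspace mtopology. (g ^^ i) z \<in> mball ((g ^^ i) q) \<eta>}"
        by (rule openin_continuous_map_preimage[OF continuous_map_funpow[OF cont]]) simp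
      then show "openin mtopology {z \<in> M. (g ^^ i) z \<in> mball ((g ^^ i) q) \<eta>}" by simp
    qed auto
    have qW: "q \<in> W" using qM funpow_in[OF gM qM] \<eta>pos by (auto simp: W_def)
    have "B \<noteq> {}" "W \<noteq> {}" using xB qW by auto
    then obtain k where k: "k > 0" "(g ^^ k) ` B \<inter> W \<noteq> {}" using trans[rule_format, of B W] Bopen Wopen by blast
    then obtain y where y: "y \<in> B" "(g ^^ k) y \<in> W" by blast
    define m where "m = (k div n + 1) * n"
    define r where "r = m - k"
    have km: "m = r + k" and rn: "r \<le> n"
    proof -
      have e: "n * (k div n) + k mod n = k" by (rule mult_div_mod_eq)
      have b: "k mod n < n" using n(1) by simp
      have m': "m = n * (k div n) + n" unfolding m_def by (simp add: algebra_simps)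
      show "m = r + k" "r \<le> n" unfolding r_def m' using e b by arith+
    qed
    have yM: "y \<in> M" and ppM: "pp \<in> M" using y pp N by (auto simp: B_def)
    have "(g ^^ r) ((g ^^ k) y) \<in> mball ((g ^^ r) q) \<eta>" using y(2) rn by (auto simp: W_def)
    then have d1: "d ((g ^^ r) q) ((g ^^ m) y) < \<eta>" by (simp add: km funpow_add)
    have d2: "(g ^^ m) pp = pp" unfolding m_def by (rule funpow_mult_fix[OF n(2)])
    have d3: "\<delta>/2 \<le> d x ((g ^^ r) q)" using q(2) by blast
    have d4: "d x pp < \<eta>" using pp(2) by (simp add: B_def)
    have gmx: "(g ^^ m) x \<in> M" and gmy: "(g ^^ m) y \<in> M" and grq: "(g ^^ r) q \<in> M"
      using funpow_in[OF gM] xM yM qM by auto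
    have "d ((g ^^ m) x) ((g ^^ m) pp) > \<eta> \<or> d ((g ^^ m) x) ((g ^^ m) y) > \<eta>"
    proof (rule ccontr)
      assume "\<not> ?thesis"
      then have a: "d ((g ^^ m) x) pp \<le> \<eta>" "d ((g ^^ m) x) ((g ^^ m) y) \<le> \<eta>" using d2 by auto
      have "d pp ((g ^^ m) y) \<le> d pp ((g ^^ m) x) + d ((g ^^ m) x) ((g ^^ m) y)"
        using triangle[of pp "(g ^^ m) x" "(g ^^ m) y"] ppM gmx gmy by simp
      moreover have "d x ((g ^^ r) q) \<le> d x pp + d pp ((g ^^ r) q)"
        using triangle[of x pp "(g ^^ r) q"] xM ppM grq by simp
      moreover have "d pp ((g ^^ r) q) \<le> d pp ((g ^^ m) y) + d ((g ^^ m) y) ((g ^^ r) q)"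
        using triangle[of pp "(g ^^ m) y" "(g ^^ r) q"] ppM gmy grq by simp
      ultimately show False using a d1 d3 d4 by (simp add: commute \<eta>_def)
    qed
    then show "\<exists>y\<in>N. \<exists>n. d ((g ^^ n) x) ((g ^^ n) y) > \<eta>"
      using pp(2) y(1) by (auto simp: B_def)
  qed
qed

end


lemma openin_decomp:
  assumes disj: "\<forall>A\<in>P. \<forall>B\<in>P. A \<inter> B \<noteq> {} \<longrightarrow> A = B"
  shows "openin (decomp_topology X P) U \<longleftrightarrow> U \<subseteq> P \<and> openin X (\<Union>U)"
proof -
  have i1: "openin X (\<Union>(S \<inter> T))" if S: "S \<subseteq> P" "openin X (\<Union>S)" and T: "T \<subseteq> P" "openin X (\<Union>T)" for S T
  proof -
    have "\<Union>(S \<inter> T) = \<Union>S \<inter> \<Union>T"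
    proof
      show "\<Union>S \<inter> \<Union>T \<subseteq> \<Union>(S \<inter> T)"
      proof
        fix x assume "x \<in> \<Union>S \<inter> \<Union>T"
        then obtain A B where AB: "A \<in> S" "B \<in> T" "x \<in> A" "x \<in> B" by blast
        then have "A \<in> P" "B \<in> P" using S T by auto
        then have "A = B" using disj AB by blast
        then show "x \<in> \<Union>(S \<inter> T)" using AB by blast
      qed
    qed blast
    then show ?thesis using S T by auto
  qed
  have i2: "openin X (\<Union>(\<Union>K))" if K: "\<forall>S\<in>K. S \<subseteq> P \<and> openin X (\<Union>S)" for K
  proof -
    have "\<Union>(\<Union>K) = \<Union>(Union ` K)" by blast
    moreover have "openin X (\<Union>(Union ` K))" using K by blast
    ultimately show ?thesis by simp
  qed
  have "istopology (\<lambda>\<U>. \<U> \<subseteq> P \<and> openin X (\<Union>\<U>))"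
    unfolding istopology_def
  proof (rule conjI)
    show "\<forall>S T. S \<subseteq> P \<and> openin X (\<Union>S) \<longrightarrow> T \<subseteq> P \<and> openin X (\<Union>T) \<longrightarrow> S \<inter> T \<subseteq> P \<and> openin X (\<Union>(S \<inter> T))"
      using i1 by blast
    show "\<forall>K. (\<forall>S\<in>K. S \<subseteq> P \<and> openin X (\<Union>S)) \<longrightarrow> \<Union>K \<subseteq> P \<and> openin X (\<Union>(\<Union>K))"
      using i2 by blast
  qed
  then show ?thesis unfolding decomp_topology_def by simp
qed

lemma mainlem:
  fixes Y :: "'b set" and \<rho> :: "'b \<Rightarrow> 'b \<Rightarrow> real"
    and f :: "(nat \<Rightarrow> bool) \<Rightarrow> 'b"
    and G :: "(nat \<Rightarrow> bool) \<Rightarrow> (nat \<Rightarrow> bool)"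
  assumes met: "Metric_space Y \<rho>"
    and cpt: "compact_space (Metric_space.mtopology Y \<rho>)"
    and inf: "infinite Y"
    and fc: "continuous_map cantor_top (Metric_space.mtopology Y \<rho>) f"
    and fs: "f ` UNIV = Y"
    and Gc: "continuous_map cantor_top cantor_top G"
    and Gs: "surj G"
    and Gch: "chaotic UNIV cantor_dist G"
    and GD: "\<forall>D \<in> {f -` {y} | y. y \<in> Y}. G ` D \<in> {f -` {y} | y. y \<in> Y}"
    and Df: "Df = {f -` {y} | y. y \<in> Y}"
    and h: "h = (\<lambda>y. f -` {y})"
    and F: "F = (\<lambda>y. inv_into Y h (G ` (h y)))"
  shows "homeomorphic_map (Metric_space.mtopology Y \<rho>) (decomp_topology cantor_top Df) h
          \<and> continuous_map (Metric_space.mtopology Y \<rho>) (Metric_space.mtopology Y \<rho>) F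
          \<and> F ` Y = Y
          \<and> chaotic Y \<rho> F"
proof -
  interpret YM: Metric_space Y \<rho> by (rule met)
  let ?T = "YM.mtopology"
  have fY: "f x \<in> Y" for x using fs by blast
  have fib: "x \<in> h y \<longleftrightarrow> f x = y" for x y by (simp add: h)
  have hinj: "inj_on h Y"
  proof (rule inj_onI)
    fix a b assume "a \<in> Y" "b \<in> Y" "h a = h b"
    then obtain x where "f x = a" using fs by blast
    then have "x \<in> h a" by (simp add: fib)
    then have "x \<in> h b" using \<open>h a = h b\<close> by simp
    then show "a = b" using \<open>f x = a\<close> by (simp add: fib)
  qed
  have Dfh: "Df = h ` Y" by (auto simp: Df h)
  have FG: "F (f x) = f (G x)" for x
  proof -
    have "G ` h (f x) \<in> Df" using GD fY[of x] by (auto simp: Df h)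
    then obtain y' where y': "y' \<in> Y" "G ` h (f x) = h y'" using Dfh by blast
    have "F (f x) = y'" using y' hinj by (simp add: F inv_into_f_f)
    moreover have "G x \<in> h y'" using y'(2) by (metis fib image_eqI)
    ultimately show ?thesis by (simp add: fib)
  qed
  have Fcomp0: "F \<circ> f = f \<circ> G" by (rule ext) (simp add: FG)
  have FGn: "(F ^^ n) (f x) = f ((G ^^ n) x)" for n x
    by (induction n) (simp_all add: FG)
  have FY: "F ` Y = Y"
  proof -
    have "F ` Y = F ` f ` UNIV" using fs by simp
    also have "\<dots> = f ` G ` UNIV" by (simp only: image_comp Fcomp0)
    also have "\<dots> = Y" using Gs fs by simp
    finally show ?thesis .
  qed
  have cl: "closed_map cantor_top ?T f"
    by (rule continuous_imp_closed_map_gen[OF compact_cantor Hausdorff_imp_kc_space[OF YM.Hausdorff_space_mtopology] fc])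
  have qf: "quotient_map cantor_top ?T f"
    by (rule continuous_closed_imp_quotient_map[OF fc cl]) (simp add: fs)
  have qf2: "openin ?T W \<longleftrightarrow> openin cantor_top {x. f x \<in> W}" if "W \<subseteq> Y" for W
    using qf that unfolding quotient_map_def by simp
  have disj: "\<forall>A\<in>Df. \<forall>B\<in>Df. A \<inter> B \<noteq> {} \<longrightarrow> A = B" by (auto simp: Df)
  have od: "openin (decomp_topology cantor_top Df) U \<longleftrightarrow> U \<subseteq> Df \<and> openin cantor_top (\<Union>U)" for U
    by (rule openin_decomp[OF disj])
  have UDf: "\<Union>Df = UNIV" using fY by (auto simp: Df)
  have topD: "topspace (decomp_topology cantor_top Df) = Df"
  proof
    show "topspace (decomp_topology cantor_top Df) \<subseteq> Df"
      unfolding topspace_def using od by blast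
    have "openin (decomp_topology cantor_top Df) Df" using od UDf by (metis openin_topspace topspace_cantor order_refl)
    then show "Df \<subseteq> topspace (decomp_topology cantor_top Df)" by (rule openin_subset)
  qed
  have homeo: "homeomorphic_map ?T (decomp_topology cantor_top Df) h"
    unfolding homeomorphic_map_def quotient_map_def
  proof (intro conjI allI impI)
    show "h ` topspace ?T = topspace (decomp_topology cantor_top Df)" using topD Dfh by simp
    show "inj_on h (topspace ?T)" using hinj by simp
    fix U assume "U \<subseteq> topspace (decomp_topology cantor_top Df)"
    then have U: "U \<subseteq> Df" using topD by simp
    have eq: "{x. f x \<in> {y \<in> Y. h y \<in> U}} = \<Union>U"
    proof
      show "{x. f x \<in> {y \<in> Y. h y \<in> U}} \<subseteq> \<Union>U"
      proof
        fix x assume "x \<in> {x. f x \<in> {y \<in> Y. h y \<in> U}}"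
        then have "h (f x) \<in> U" by simp
        moreover have "x \<in> h (f x)" by (simp add: fib)
        ultimately show "x \<in> \<Union>U" by blast
      qed
      show "\<Union>U \<subseteq> {x. f x \<in> {y \<in> Y. h y \<in> U}}"
      proof
        fix x assume "x \<in> \<Union>U"
        then obtain A where A: "A \<in> U" "x \<in> A" by blast
        then obtain y where "y \<in> Y" "A = h y" using U Dfh by blast
        then have "A = h (f x)" using A(2) by (simp add: fib)
        then show "x \<in> {x. f x \<in> {y \<in> Y. h y \<in> U}}" using A(1) fY by simp
      qed
    qed
    have "openin ?T {y \<in> Y. h y \<in> U} \<longleftrightarrow> openin cantor_top (\<Union>U)"
      using qf2[of "{y \<in> Y. h y \<in> U}"] eq by simp
    then show "openin ?T {x \<in> topspace ?T. h x \<in> U} \<longleftrightarrow> openin (decomp_topology cantor_top Df) U"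
      using od U by simp
  qed
  have Fcomp: "F \<circ> f = f \<circ> G" by (rule ext) (simp add: FG)
  have Fc: "continuous_map ?T ?T F"
  proof (rule continuous_compose_quotient_map[OF qf])
    show "continuous_map cantor_top ?T (F \<circ> f)"
      unfolding Fcomp by (rule continuous_map_compose[OF Gc fc])
  qed
  have Gch': "(\<forall>U V. openin cantor_top U \<and> openin cantor_top V \<and> U \<noteq> {} \<and> V \<noteq> {}
                 \<longrightarrow> (\<exists>n>0. (G ^^ n) ` U \<inter> V \<noteq> {}))"
     "cantor_top closure_of {x. \<exists>n>0. (G ^^ n) x = x} = UNIV"
    using Gch unfolding chaotic_def cantor_top_def[symmetric] by auto
  have trF: "\<forall>U V. openin ?T U \<and> openin ?T V \<and> U \<noteq> {} \<and> V \<noteq> {} \<longrightarrow> (\<exists>n>0. (F ^^ n) ` U \<inter> V \<noteq> {})"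
  proof (intro allI impI)
    fix U V assume a: "openin ?T U \<and> openin ?T V \<and> U \<noteq> {} \<and> V \<noteq> {}"
    have oU: "openin cantor_top {x. f x \<in> U}"
      using openin_continuous_map_preimage[OF fc, of U] a by simp
    have oV: "openin cantor_top {x. f x \<in> V}"
      using openin_continuous_map_preimage[OF fc, of V] a by simp
    have "U \<subseteq> Y" "V \<subseteq> Y" using a openin_subset by fastforce+
    moreover obtain u v where "u \<in> U" "v \<in> V" using a by blast
    ultimately obtain xu xv where "f xu = u" "f xv = v" using fs by (metis imageE subsetD)
    then have "{x. f x \<in> U} \<noteq> {}" "{x. f x \<in> V} \<noteq> {}" using \<open>u \<in> U\<close> \<open>v \<in> V\<close> by auto
    then obtain n where n: "n > 0" "(G ^^ n) ` {x. f x \<in> U} \<inter> {x. f x \<in> V} \<noteq> {}"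
      using Gch'(1)[rule_format, of "{x. f x \<in> U}" "{x. f x \<in> V}"] oU oV by blast
    then obtain x where "f x \<in> U" "f ((G ^^ n) x) \<in> V" by blast
    then have "(F ^^ n) (f x) \<in> (F ^^ n) ` U \<inter> V" by (metis FGn IntI imageI)
    then show "\<exists>n>0. (F ^^ n) ` U \<inter> V \<noteq> {}" using n(1) by blast
  qed
  have dF: "?T closure_of {x \<in> Y. \<exists>n>0. (F ^^ n) x = x} = Y"
  proof
    show "?T closure_of {x \<in> Y. \<exists>n>0. (F ^^ n) x = x} \<subseteq> Y"
      using closure_of_subset_topspace[of ?T] by simp
    have sub: "f ` {x. \<exists>n>0. (G ^^ n) x = x} \<subseteq> {x \<in> Y. \<exists>n>0. (F ^^ n) x = x}"
      proof
      fix z assume "z \<in> f ` {x. \<exists>n>0. (G ^^ n) x = x}"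
      then obtain x n where xn: "z = f x" "n > 0" "(G ^^ n) x = x" by blast
      then have "(F ^^ n) z = z" by (simp add: FGn)
      then show "z \<in> {x \<in> Y. \<exists>n>0. (F ^^ n) x = x}" using xn fY by blast
    qed
    have "Y = f ` (cantor_top closure_of {x. \<exists>n>0. (G ^^ n) x = x})" using Gch'(2) fs by simp
    also have "\<dots> \<subseteq> ?T closure_of (f ` {x. \<exists>n>0. (G ^^ n) x = x})"
      by (rule continuous_map_image_closure_subset[OF fc])
    also have "\<dots> \<subseteq> ?T closure_of {x \<in> Y. \<exists>n>0. (F ^^ n) x = x}"
      by (rule closure_of_mono[OF sub])
    finally show "Y \<subseteq> ?T closure_of {x \<in> Y. \<exists>n>0. (F ^^ n) x = x}" .
  qed
  have sF: "\<exists>\<eta>>0. \<forall>x\<in>Y. \<forall>N. openin ?T N \<and> x \<in> N \<longrightarrow>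
            (\<exists>y\<in>N. \<exists>n. \<rho> ((F ^^ n) x) ((F ^^ n) y) > \<eta>)"
    by (rule YM.banks[OF inf Fc trF dF])
  have "chaotic Y \<rho> F" unfolding chaotic_def using FY trF dF sF by blast
  then show ?thesis using homeo Fc FY by blast
qed


theorem mainTheorem7:
  fixes Y :: "'b set" and \<rho> :: "'b \<Rightarrow> 'b \<Rightarrow> real"
    and f :: "(nat \<Rightarrow> bool) \<Rightarrow> 'b"
    and G :: "(nat \<Rightarrow> bool) \<Rightarrow> (nat \<Rightarrow> bool)"
  assumes "Metric_space Y \<rho>"
    and "compact_space (Metric_space.mtopology Y \<rho>)"
    and "infinite Y"
    and "continuous_map cantor_top (Metric_space.mtopology Y \<rho>) f"
    and "f ` UNIV = Y"
    and "continuous_map cantor_top cantor_top G"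
    and "surj G"
    and "chaotic UNIV cantor_dist G"
    and "\<forall>D \<in> {f -` {y} | y. y \<in> Y}. G ` D \<in> {f -` {y} | y. y \<in> Y}"
  shows "let Df = {f -` {y} | y. y \<in> Y};
             h = (\<lambda>y. f -` {y});
             H = (\<lambda>D. G ` D);
             F = (\<lambda>y. inv_into Y h (H (h y)))
         in homeomorphic_map (Metric_space.mtopology Y \<rho>) (decomp_topology cantor_top Df) h
          \<and> continuous_map (Metric_space.mtopology Y \<rho>) (Metric_space.mtopology Y \<rho>) F
          \<and> F ` Y = Y
          \<and> chaotic Y \<rho> F"
  unfolding Let_def
  by (rule mainlem[OF assms refl refl refl])

end
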